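(* Let $U$ be the set of pairs $(p,q)\in\mathbb D^2\times\mathbb D^2$ with $p=(p_1,p_2)$, $q=(q_1,q_2)$ satisfying $|p_2|<|p_1|$, $|q_2|<|q_1|$ and $m\!\left(p_2/p_1,\,q_2/q_1\right)<m(p_1,q_1)$, and let $\sigma(p,q):=((p_2,p_1),(q_2,q_1))$. Then for every $(p,q)\in U\cup\sigma(U)$ with $p\ne q$ we have $c(p,q)=l(p,q)$; more precisely, for $(p,q)\in U$ both equal $\log|p_1q_1|$.
   Context: $\mathbb D$ is the open unit disc; $m(\lambda_1,\lambda_2):=\left|\frac{\lambda_1-\lambda_2}{1-\bar\lambda_1\lambda_2}\right|$ is the Möbius distance on $\mathbb D$. For distinct $p,q\in\mathbb D^2$, $c(p,q):=c_{\mathbb D^2}((0,0);p,q)$ and $l(p,q):=l_{\mathbb D^2}((0,0);p,q)$, where for a domain $D$, $z\in D$ and distinct poles $p_1,\dots,p_N\in D$: $l_D(z;p_1,\dots,p_N)$ is the infimum of $\sum_j\log|\lambda_j|$ over holomorphic $\psi:\mathbb D\to D$ and $\lambda_j\in\mathbb D$ with $\psi(0)=z$, $\psi(\lambda_j)=p_j$; and $c_D(z;p_1,\dots,p_N)=\sup\{\log|F(z)|: F:D\to\mathbb D\text{ holomorphic}, F(p_j)=0\ \forall j\}$. *)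

theory Defs
  imports "HOL-Analysis.Analysis" "HOL-Library.Extended_Real"
begin

definition unit_disc :: "complex set" where "unit_disc = ball 0 1"
definition bidisc :: "(complex \<times> complex) set" where "bidisc = unit_disc \<times> unit_disc"

definition moeb :: "complex \<Rightarrow> complex \<Rightarrow> real" where
  "moeb a b = cmod ((a - b) / (1 - cnj a * b))"

definition elog :: "real \<Rightarrow> ereal" where
  "elog x = (if x = 0 then -\<infinity> else ereal (ln x))"

definition holo2_on :: "(complex \<times> complex \<Rightarrow> complex) \<Rightarrow> (complex \<times> complex) set \<Rightarrow> bool" where
  "holo2_on F S \<longleftrightarrow> (\<forall>z\<in>S. \<exists>a b. (F has_derivative (\<lambda>(u,v). a * u + b * v)) (at z))"

text \<open>Lempert function l_{D^2}((0,0); p, q): infimum over analytic discs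
  psi = (psi1, psi2) : D \<rightarrow> D^2 with psi 0 = (0,0), psi la1 = p, psi la2 = q.\<close>
definition lemp :: "complex \<times> complex \<Rightarrow> complex \<times> complex \<Rightarrow> ereal" where
  "lemp p q = Inf {elog (cmod la1) + elog (cmod la2) | la1 la2 psi1 psi2.
      psi1 holomorphic_on unit_disc \<and> psi2 holomorphic_on unit_disc \<and>
      psi1 ` unit_disc \<subseteq> unit_disc \<and> psi2 ` unit_disc \<subseteq> unit_disc \<and>
      psi1 0 = 0 \<and> psi2 0 = 0 \<and> la1 \<in> unit_disc \<and> la2 \<in> unit_disc \<and>
      (psi1 la1, psi2 la1) = p \<and> (psi1 la2, psi2 la2) = q}"

text \<open>Green (Caratheodory-type) function c_{D^2}((0,0); p, q).\<close>
definition cgreen :: "complex \<times> complex \<Rightarrow> complex \<times> complex \<Rightarrow> ereal" where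
  "cgreen p q = Sup {elog (cmod (F (0,0))) | F.
      holo2_on F bidisc \<and> F ` bidisc \<subseteq> unit_disc \<and> F p = 0 \<and> F q = 0}"

definition Uset :: "((complex \<times> complex) \<times> (complex \<times> complex)) set" where
  "Uset = {(p, q). p \<in> bidisc \<and> q \<in> bidisc \<and>
      cmod (snd p) < cmod (fst p) \<and> cmod (snd q) < cmod (fst q) \<and>
      moeb (snd p / fst p) (snd q / fst q) < moeb (fst p) (fst q)}"

definition swap_pair :: "(complex \<times> complex) \<times> (complex \<times> complex) \<Rightarrow> (complex \<times> complex) \<times> (complex \<times> complex)" where
  "swap_pair pq = ((snd (fst pq), fst (fst pq)), (snd (snd pq), fst (snd pq)))"

end

theory Submission
  imports Defs "HOL-Complex_Analysis.Complex_Analysis"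
begin

abbreviation mob :: "complex \<Rightarrow> complex \<Rightarrow> complex" where
  "mob w \<equiv> Moebius_function 0 w"

lemma mob_denom:
  assumes "norm a < 1" "norm z < 1" shows "1 - cnj a * z \<noteq> 0"
proof
  assume "1 - cnj a * z = 0"
  then have "cnj a * z = 1" by simp
  then have "norm a * norm z = 1" by (metis complex_mod_cnj norm_mult norm_one)
  moreover have "norm a * norm z < 1"
    using assms by (metis mult_less_cancel_right1 mult_strict_mono' norm_ge_zero mult.commute
        le_less_trans mult_right_le_one_le less_imp_le)
  ultimately show False by simp
qed

lemma mob_zero_iff:
  assumes "norm a < 1" "norm z < 1" shows "mob a z = 0 \<longleftrightarrow> z = a"
  using mob_denom[OF assms] by (simp add: Moebius_function_simple)

lemma mob_at0: "mob a 0 = - a"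
  by (simp add: Moebius_function_of_zero)

lemma mob_inv:
  assumes "norm c < 1" "norm z < 1" shows "mob (-c) (mob c z) = z"
  using Moebius_function_compose[of "-c" c z] assms by simp

lemma mob_inv2:
  assumes "norm c < 1" "norm z < 1" shows "mob c (mob (-c) z) = z"
  using Moebius_function_compose[of c "-c" z] assms by simp

lemma mob_lt1: "norm c < 1 \<Longrightarrow> norm z < 1 \<Longrightarrow> norm (mob c z) < 1"
  by (rule Moebius_function_norm_lt_1)

lemma schwarz_pick0:
  assumes hf: "f holomorphic_on ball 0 1" and im: "f ` ball 0 1 \<subseteq> ball 0 1"
    and c: "norm c < 1" and fc: "f c = 0" and z: "norm z < 1"
  shows "norm (f z) \<le> norm (mob c z)"
proof -
  define F where "F = f \<circ> mob (-c)"
  have hF: "F holomorphic_on ball 0 1" unfolding F_def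
    by (rule holomorphic_on_compose_gen[OF Moebius_function_holomorphic hf])
       (use c mob_lt1 in auto)
  have F0: "F 0 = 0" by (simp add: F_def mob_at0 fc)
  have no: "norm (F w) < 1" if "norm w < 1" for w
    using im mob_lt1[of "-c" w] c that by (auto simp: F_def image_subset_iff)
  have w: "norm (mob c z) < 1" using mob_lt1 c z by blast
  have "norm (F (mob c z)) \<le> norm (mob c z)"
    by (rule Schwarz_Lemma(1)[OF hF F0 no w])
  moreover have "F (mob c z) = f z" using mob_inv[OF c z] by (simp add: F_def)
  ultimately show ?thesis by simp
qed

lemma schwarz_two:
  assumes hh: "h holomorphic_on ball 0 1" and im: "h ` ball 0 1 \<subseteq> ball 0 1"
    and a: "norm a < 1" and b: "norm b < 1" and ab: "a \<noteq> b"
    and ha: "h a = 0" and hb: "h b = 0"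
  shows "norm (h 0) \<le> norm a * norm b"
proof -
  define k where "k = h \<circ> mob (-a)"
  have hk: "k holomorphic_on ball 0 1" unfolding k_def
    by (rule holomorphic_on_compose_gen[OF Moebius_function_holomorphic hh])
       (use a mob_lt1 in auto)
  have k0: "k 0 = 0" by (simp add: k_def mob_at0 ha)
  have kno: "norm (k w) < 1" if "norm w < 1" for w
    using im mob_lt1[of "-a" w] a that by (auto simp: k_def image_subset_iff)
  obtain g where hg: "g holomorphic_on ball 0 1" and kg: "\<And>z. norm z < 1 \<Longrightarrow> k z = z * g z"
    and dk: "deriv k 0 = g 0"
    using Schwarz3[OF hk k0] by blast
  have gle: "norm (g z) \<le> 1" if z: "norm z < 1" for z
  proof (cases "z = 0")
    case True
    then show ?thesis using Schwarz_Lemma(2)[OF hk k0 kno, of 0] dk by simp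
  next
    case False
    have "norm (k z) \<le> norm z" by (rule Schwarz_Lemma(1)[OF hk k0 kno z])
    then have "norm z * norm (g z) \<le> norm z * 1" using kg[OF z] by (simp add: norm_mult)
    then show ?thesis using False by simp
  qed
  define b' where "b' = mob a b"
  have b'1: "norm b' < 1" using mob_lt1 a b b'_def by blast
  have b'0: "b' \<noteq> 0" using mob_zero_iff[OF a b] ab b'_def by auto
  have kb': "k b' = 0" using mob_inv[OF a b] hb by (simp add: k_def b'_def)
  have glt: "norm (g z) < 1" if z: "norm z < 1" for z
  proof (rule ccontr)
    assume "\<not> norm (g z) < 1"
    then have g1: "norm (g z) = 1" using gle[OF z] by simp
    have "(\<exists>z. norm z < 1 \<and> z \<noteq> 0 \<and> norm(k z) = norm z) \<or> norm(deriv k 0) = 1"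
    proof (cases "z = 0")
      case True then show ?thesis using g1 dk by simp
    next
      case False then show ?thesis using g1 kg[OF z] z by (auto simp: norm_mult)
    qed
    then obtain \<alpha> where al: "\<forall>z. norm z < 1 \<longrightarrow> k z = \<alpha> * z" and "norm \<alpha> = 1"
      using Schwarz_Lemma(3)[OF hk k0 kno, of 0] by auto
    then have "k b' \<noteq> 0" using b'1 b'0 by auto
    then show False using kb' by simp
  qed
  define G where "G = g \<circ> mob a"
  have hG: "G holomorphic_on ball 0 1" unfolding G_def
    by (rule holomorphic_on_compose_gen[OF Moebius_function_holomorphic hg])
       (use a mob_lt1 in auto)
  have imG: "G ` ball 0 1 \<subseteq> ball 0 1"
    using glt mob_lt1[OF a] by (auto simp: G_def)
  have Gb: "G b = 0" using kg[OF b'1] kb' b'0 by (simp add: G_def b'_def)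
  have "norm (G 0) \<le> norm (mob b 0)"
    by (rule schwarz_pick0[OF hG imG b Gb]) simp
  then have G0: "norm (G 0) \<le> norm b" by (simp add: mob_at0)
  have "h 0 = k (mob a 0)" using mob_inv[OF a, of 0] by (simp add: k_def)
  also have "\<dots> = (- a) * G 0" using kg[of "-a"] a by (simp add: mob_at0 G_def)
  finally have "norm (h 0) = norm a * norm (G 0)" by (simp add: norm_mult)
  also have "\<dots> \<le> norm a * norm b" using G0 by (simp add: mult_left_mono)
  finally show ?thesis .
qed

lemma norm_mult_lt1: "norm (x::complex) < 1 \<Longrightarrow> norm y < 1 \<Longrightarrow> norm (x * y) < 1"
  using norm_mult_less[of x 1 y 1] by simp

lemma moeb_mob: "moeb a b = norm (mob a b)"
  unfolding moeb_def Moebius_function_simple by (simp add: norm_divide norm_minus_commute)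

lemma phi_exists:
  assumes p1: "norm p1 < 1" and q1: "norm q1 < 1" and w1: "norm w1 < 1" and w2: "norm w2 < 1"
    and m: "moeb w1 w2 < moeb p1 q1"
  obtains \<phi> where "\<phi> holomorphic_on ball 0 1" "\<phi> ` ball 0 1 \<subseteq> ball 0 1"
    "\<phi> p1 = w1" "\<phi> q1 = w2"
proof -
  have "0 \<le> moeb w1 w2" by (simp add: moeb_def)
  then have mpos: "0 < moeb p1 q1" using m by linarith
  then have mne: "mob p1 q1 \<noteq> 0" unfolding moeb_mob by auto
  define c where "c = mob w1 w2 / mob p1 q1"
  have c1: "norm c < 1" using m mpos by (simp add: c_def norm_divide moeb_mob)
  define \<phi> where "\<phi> = (\<lambda>z. mob (-w1) (c * mob p1 z))"
  have inner: "norm (c * mob p1 z) < 1" if "norm z < 1" for z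
    using norm_mult_lt1[OF c1 mob_lt1[OF p1 that]] .
  have h1: "(\<lambda>z. c * mob p1 z) holomorphic_on ball 0 1"
    by (intro holomorphic_intros Moebius_function_holomorphic p1)
  have "(mob (-w1) \<circ> (\<lambda>z. c * mob p1 z)) holomorphic_on ball 0 1"
    by (rule holomorphic_on_compose_gen[OF h1 Moebius_function_holomorphic]) (use w1 inner in auto)
  then have "\<phi> holomorphic_on ball 0 1" by (simp add: \<phi>_def o_def)
  moreover have "\<phi> ` ball 0 1 \<subseteq> ball 0 1"
    using inner mob_lt1[of "-w1"] w1 by (auto simp: \<phi>_def)
  moreover have "\<phi> p1 = w1" by (simp add: \<phi>_def Moebius_function_eq_zero mob_at0)
  moreover have "\<phi> q1 = w2" using mne mob_inv[OF w1 w2] by (simp add: \<phi>_def c_def)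
  ultimately show ?thesis using that by blast
qed

lemma holo_comp:
  assumes F: "holo2_on F bidisc" and hp: "psi holomorphic_on ball 0 1"
    and ip: "psi ` ball 0 1 \<subseteq> ball 0 1"
  shows "(\<lambda>z. F (z, psi z)) holomorphic_on ball 0 1"
  unfolding holomorphic_on_def field_differentiable_def
proof
  fix z :: complex assume z: "z \<in> ball 0 1"
  from hp have "\<forall>x\<in>ball 0 1. \<exists>f'. (psi has_field_derivative f') (at x)"
    by (simp add: holomorphic_on_open)
  with z obtain d where d: "(psi has_field_derivative d) (at z)" by blast
  have "(z, psi z) \<in> bidisc" using z ip by (auto simp: bidisc_def unit_disc_def image_subset_iff)
  then obtain a b where ab: "(F has_derivative (\<lambda>(u,v). a * u + b * v)) (at (z, psi z))"
    using F unfolding holo2_on_def by blast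
  have g: "((\<lambda>t. (t, psi t)) has_derivative (\<lambda>t. (t, d * t))) (at z)"
    by (intro has_derivative_Pair has_derivative_ident)
       (use d in \<open>simp add: has_field_derivative_def\<close>)
  have "((F \<circ> (\<lambda>t. (t, psi t))) has_derivative ((\<lambda>(u,v). a * u + b * v) \<circ> (\<lambda>t. (t, d * t)))) (at z)"
    by (rule diff_chain_at[OF g ab])
  moreover have "((\<lambda>(u,v). a * u + b * v) \<circ> (\<lambda>t. (t, d * t))) = (*) (a + b * d)"
    by (auto simp: algebra_simps)
  ultimately have "((\<lambda>z. F (z, psi z)) has_field_derivative (a + b * d)) (at z)"
    by (simp add: has_field_derivative_def o_def)
  then show "\<exists>f'. ((\<lambda>z. F (z, psi z)) has_field_derivative f') (at z within ball 0 1)"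
    using has_field_derivative_at_within by blast
qed

lemma U_case:
  assumes U: "(p, q) \<in> Uset" and pq: "p \<noteq> q"
  shows "cgreen p q = ereal (ln (cmod (fst p) * cmod (fst q))) \<and>
         lemp p q = ereal (ln (cmod (fst p) * cmod (fst q)))"
proof -
  obtain p1 p2 q1 q2 where pp: "p = (p1,p2)" and qq: "q = (q1,q2)" by (cases p, cases q) auto
  from U have p1: "norm p1 < 1" and p2: "norm p2 < 1" and q1: "norm q1 < 1" and q2: "norm q2 < 1"
    and lp: "cmod p2 < cmod p1" and lq: "cmod q2 < cmod q1"
    and m: "moeb (p2/p1) (q2/q1) < moeb p1 q1"
    by (auto simp: Uset_def bidisc_def unit_disc_def pp qq)
  have p1ne: "p1 \<noteq> 0" using lp by auto
  have q1ne: "q1 \<noteq> 0" using lq by auto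
  have w1: "norm (p2/p1) < 1" using lp p1ne by (simp add: norm_divide)
  have w2: "norm (q2/q1) < 1" using lq q1ne by (simp add: norm_divide)
  have pq1: "p1 \<noteq> q1"
  proof
    assume "p1 = q1" then have "moeb p1 q1 = 0" by (simp add: moeb_def)
    moreover have "0 \<le> moeb (p2/p1) (q2/q1)" by (simp add: moeb_def)
    ultimately show False using m by linarith
  qed
  obtain \<phi> where hphi: "\<phi> holomorphic_on ball 0 1" and iphi: "\<phi> ` ball 0 1 \<subseteq> ball 0 1"
    and phip: "\<phi> p1 = p2/p1" and phiq: "\<phi> q1 = q2/q1"
    using phi_exists[OF p1 q1 w1 w2 m] by blast
  define psi2 where "psi2 = (\<lambda>z. z * \<phi> z)"
  have hpsi: "psi2 holomorphic_on ball 0 1" unfolding psi2_def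
    by (intro holomorphic_intros hphi)
  have ipsi: "psi2 ` ball 0 1 \<subseteq> ball 0 1"
    using iphi by (auto simp: psi2_def image_subset_iff intro!: norm_mult_lt1)
  have psip: "psi2 p1 = p2" using p1ne by (simp add: psi2_def phip)
  have psiq: "psi2 q1 = q2" using q1ne by (simp add: psi2_def phiq)
  define L where "L = ereal (ln (cmod p1 * cmod q1))"
  have pos: "0 < cmod p1 * cmod q1" using p1ne q1ne by simp
  have elogL: "elog (cmod p1) + elog (cmod q1) = L"
    using p1ne q1ne by (simp add: elog_def L_def ln_mult)
  have c1: "lemp p q \<le> L"
    unfolding lemp_def
  proof (rule Inf_lower, rule CollectI)
    show "\<exists>la1 la2 psi1 psi2a. L = elog (cmod la1) + elog (cmod la2) \<and>
      psi1 holomorphic_on unit_disc \<and> psi2a holomorphic_on unit_disc \<and>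
      psi1 ` unit_disc \<subseteq> unit_disc \<and> psi2a ` unit_disc \<subseteq> unit_disc \<and>
      psi1 0 = 0 \<and> psi2a 0 = 0 \<and> la1 \<in> unit_disc \<and> la2 \<in> unit_disc \<and>
      (psi1 la1, psi2a la1) = p \<and> (psi1 la2, psi2a la2) = q"
      apply (rule exI[where x=p1], rule exI[where x=q1], rule exI[where x="\<lambda>z. z"], rule exI[where x=psi2])
      using elogL hpsi ipsi psip psiq p1 q1
      by (auto simp: unit_disc_def pp qq psi2_def)
  qed
  define F0 where "F0 = (\<lambda>z::complex\<times>complex. mob p1 (fst z) * mob q1 (fst z))"
  have hf: "(\<lambda>x. mob p1 x * mob q1 x) holomorphic_on ball 0 1"
    by (intro holomorphic_intros Moebius_function_holomorphic p1 q1)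
  have holoF0: "holo2_on F0 bidisc"
    unfolding holo2_on_def
  proof
    fix z :: "complex \<times> complex" assume z: "z \<in> bidisc"
    then have "fst z \<in> ball 0 1" by (auto simp: bidisc_def unit_disc_def)
    moreover from hf have "\<forall>x\<in>ball 0 1. \<exists>f'. ((\<lambda>x. mob p1 x * mob q1 x) has_field_derivative f') (at x)"
      by (simp add: holomorphic_on_open)
    ultimately obtain d where d: "((\<lambda>x. mob p1 x * mob q1 x) has_field_derivative d) (at (fst z))" by blast
    have "(((\<lambda>x. mob p1 x * mob q1 x) \<circ> fst) has_derivative ((*) d \<circ> fst)) (at z)"
      by (rule diff_chain_at[OF has_derivative_fst[OF has_derivative_ident]])
         (use d in \<open>simp add: has_field_derivative_def\<close>)
    moreover have "((*) d \<circ> fst) = (\<lambda>(u::complex,v::complex). d * u + 0 * v)" by auto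
    ultimately have "(F0 has_derivative (\<lambda>(u,v). d * u + 0 * v)) (at z)"
      by (simp add: F0_def o_def)
    then show "\<exists>a b. (F0 has_derivative (\<lambda>(u,v). a * u + b * v)) (at z)" by blast
  qed
  have imF0: "F0 ` bidisc \<subseteq> unit_disc"
    using mob_lt1[OF p1] mob_lt1[OF q1]
    by (auto simp: F0_def bidisc_def unit_disc_def intro!: norm_mult_lt1)
  have c2: "L \<le> cgreen p q"
    unfolding cgreen_def
  proof (rule Sup_upper, rule CollectI, rule exI[where x=F0], intro conjI)
    show "L = elog (cmod (F0 (0, 0)))"
      using p1ne q1ne by (simp add: F0_def mob_at0 elog_def L_def norm_mult)
  qed (use holoF0 imF0 in \<open>auto simp: F0_def pp qq Moebius_function_eq_zero\<close>)
  have c3: "cgreen p q \<le> L"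
    unfolding cgreen_def
  proof (rule Sup_least)
    fix x assume "x \<in> {elog (cmod (F (0, 0))) |F. holo2_on F bidisc \<and> F ` bidisc \<subseteq> unit_disc \<and> F p = 0 \<and> F q = 0}"
    then obtain F where x: "x = elog (cmod (F (0, 0)))" and hF: "holo2_on F bidisc"
      and iF: "F ` bidisc \<subseteq> unit_disc" and Fp: "F p = 0" and Fq: "F q = 0" by blast
    define h where "h = (\<lambda>z. F (z, psi2 z))"
    have hh: "h holomorphic_on ball 0 1" unfolding h_def by (rule holo_comp[OF hF hpsi ipsi])
    have ih: "h ` ball 0 1 \<subseteq> ball 0 1"
      using iF ipsi by (auto simp: h_def bidisc_def unit_disc_def image_subset_iff)
    have "norm (h 0) \<le> norm p1 * norm q1"
      by (rule schwarz_two[OF hh ih p1 q1 pq1])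
         (use Fp Fq psip psiq in \<open>auto simp: h_def pp qq\<close>)
    then have le: "norm (F (0,0)) \<le> norm p1 * norm q1" by (simp add: h_def psi2_def)
    show "x \<le> L"
    proof (cases "F (0,0) = 0")
      case True then show ?thesis by (simp add: x elog_def)
    next
      case False
      then have "ln (cmod (F (0,0))) \<le> ln (cmod p1 * cmod q1)" using le pos
        by (subst ln_le_cancel_iff) auto
      then show ?thesis using False by (simp add: x elog_def L_def)
    qed
  qed
  have c4: "L \<le> lemp p q"
    unfolding lemp_def
  proof (rule Inf_greatest)
    fix x assume "x \<in> {elog (cmod la1) + elog (cmod la2) | la1 la2 psi1 psi2.
      psi1 holomorphic_on unit_disc \<and> psi2 holomorphic_on unit_disc \<and>
      psi1 ` unit_disc \<subseteq> unit_disc \<and> psi2 ` unit_disc \<subseteq> unit_disc \<and>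
      psi1 0 = 0 \<and> psi2 0 = 0 \<and> la1 \<in> unit_disc \<and> la2 \<in> unit_disc \<and>
      (psi1 la1, psi2 la1) = p \<and> (psi1 la2, psi2 la2) = q}"
    then obtain la1 la2 s1 s2 where x: "x = elog (cmod la1) + elog (cmod la2)"
      and hs1: "s1 holomorphic_on unit_disc" and is1: "s1 ` unit_disc \<subseteq> unit_disc"
      and s10: "s1 0 = 0" and la1: "la1 \<in> unit_disc" and la2: "la2 \<in> unit_disc"
      and e1: "(s1 la1, s2 la1) = p" and e2: "(s1 la2, s2 la2) = q" by blast
    define h where "h = (\<lambda>z. mob p1 (s1 z) * mob q1 (s1 z))"
    have "((\<lambda>x. mob p1 x * mob q1 x) \<circ> s1) holomorphic_on ball 0 1"
      by (rule holomorphic_on_compose_gen[OF _ hf]) (use hs1 is1 in \<open>auto simp: unit_disc_def\<close>)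
    then have hh: "h holomorphic_on ball 0 1" by (simp add: h_def o_def)
    have ih: "h ` ball 0 1 \<subseteq> ball 0 1"
      using is1 mob_lt1[OF p1] mob_lt1[OF q1]
      by (auto simp: h_def unit_disc_def image_subset_iff intro!: norm_mult_lt1)
    have ne: "la1 \<noteq> la2" using e1 e2 pq by auto
    have "norm (h 0) \<le> norm la1 * norm la2"
      by (rule schwarz_two[OF hh ih _ _ ne])
         (use la1 la2 e1 e2 in \<open>auto simp: h_def pp qq unit_disc_def Moebius_function_eq_zero\<close>)
    then have le: "norm p1 * norm q1 \<le> norm la1 * norm la2"
      by (simp add: h_def s10 mob_at0 norm_mult)
    then have "la1 \<noteq> 0" "la2 \<noteq> 0" using pos by auto
    moreover have "ln (cmod p1 * cmod q1) \<le> ln (cmod la1 * cmod la2)" using le pos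
      by (subst ln_le_cancel_iff) auto
    ultimately show "L \<le> x"
      by (simp add: x elog_def L_def ln_mult)
  qed
  show ?thesis using c1 c2 c3 c4 by (simp add: pp qq L_def[symmetric])
qed

lemma cgreen_swap_le: "cgreen p q \<le> cgreen (prod.swap p) (prod.swap q)"
  unfolding cgreen_def
proof (rule Sup_least)
  fix x assume "x \<in> {elog (cmod (F (0, 0))) |F. holo2_on F bidisc \<and> F ` bidisc \<subseteq> unit_disc \<and> F p = 0 \<and> F q = 0}"
  then obtain F where x: "x = elog (cmod (F (0, 0)))" and hF: "holo2_on F bidisc"
    and iF: "F ` bidisc \<subseteq> unit_disc" and Fp: "F p = 0" and Fq: "F q = 0" by blast
  define G where "G = F \<circ> prod.swap"
  have sw: "(prod.swap has_derivative prod.swap) (at z)" for z :: "complex \<times> complex"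
  proof -
    have "((\<lambda>x. (snd x, fst x)) has_derivative (\<lambda>x. (snd x, fst x))) (at z)"
      by (intro has_derivative_Pair has_derivative_snd has_derivative_fst has_derivative_ident)
    moreover have "(\<lambda>x::complex\<times>complex. (snd x, fst x)) = prod.swap" by auto
    ultimately show ?thesis by simp
  qed
  have "holo2_on G bidisc"
    unfolding holo2_on_def
  proof
    fix z :: "complex \<times> complex" assume z: "z \<in> bidisc"
    then have "prod.swap z \<in> bidisc" by (auto simp: bidisc_def)
    then obtain a b where ab: "(F has_derivative (\<lambda>(u,v). a * u + b * v)) (at (prod.swap z))"
      using hF unfolding holo2_on_def by blast
    have "(G has_derivative ((\<lambda>(u,v). a * u + b * v) \<circ> prod.swap)) (at z)"
      unfolding G_def by (rule diff_chain_at[OF sw ab])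
    moreover have "((\<lambda>(u,v). a * u + b * v) \<circ> prod.swap) = (\<lambda>(u::complex,v::complex). b * u + a * v)"
      by (auto simp: algebra_simps)
    ultimately show "\<exists>a b. (G has_derivative (\<lambda>(u,v). a * u + b * v)) (at z)" by auto
  qed
  moreover have "G ` bidisc \<subseteq> unit_disc" using iF by (auto simp: G_def bidisc_def)
  moreover have "G (prod.swap p) = 0" "G (prod.swap q) = 0" using Fp Fq by (auto simp: G_def)
  moreover have "x = elog (cmod (G (0,0)))" by (simp add: x G_def)
  ultimately show "x \<le> Sup {elog (cmod (F (0, 0))) |F. holo2_on F bidisc \<and> F ` bidisc \<subseteq> unit_disc \<and> F (prod.swap p) = 0 \<and> F (prod.swap q) = 0}"
    by (intro Sup_upper) blast
qed

lemma cgreen_swap: "cgreen (prod.swap p) (prod.swap q) = cgreen p q"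
  using cgreen_swap_le[of p q] cgreen_swap_le[of "prod.swap p" "prod.swap q"] by simp

lemma lemp_swap_le: "lemp (prod.swap p) (prod.swap q) \<le> lemp p q"
  unfolding lemp_def
proof (rule Inf_greatest)
  fix x assume "x \<in> {elog (cmod la1) + elog (cmod la2) | la1 la2 psi1 psi2.
      psi1 holomorphic_on unit_disc \<and> psi2 holomorphic_on unit_disc \<and>
      psi1 ` unit_disc \<subseteq> unit_disc \<and> psi2 ` unit_disc \<subseteq> unit_disc \<and>
      psi1 0 = 0 \<and> psi2 0 = 0 \<and> la1 \<in> unit_disc \<and> la2 \<in> unit_disc \<and>
      (psi1 la1, psi2 la1) = p \<and> (psi1 la2, psi2 la2) = q}"
  then obtain la1 la2 s1 s2 where x: "x = elog (cmod la1) + elog (cmod la2)"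
    and h: "s1 holomorphic_on unit_disc" "s2 holomorphic_on unit_disc"
      "s1 ` unit_disc \<subseteq> unit_disc" "s2 ` unit_disc \<subseteq> unit_disc"
      "s1 0 = 0" "s2 0 = 0" "la1 \<in> unit_disc" "la2 \<in> unit_disc"
    and e1: "(s1 la1, s2 la1) = p" and e2: "(s1 la2, s2 la2) = q" by blast
  have e1': "(s2 la1, s1 la1) = prod.swap p" and e2': "(s2 la2, s1 la2) = prod.swap q"
    using e1 e2 by auto
  show "Inf {elog (cmod la1) + elog (cmod la2) | la1 la2 psi1 psi2.
      psi1 holomorphic_on unit_disc \<and> psi2 holomorphic_on unit_disc \<and>
      psi1 ` unit_disc \<subseteq> unit_disc \<and> psi2 ` unit_disc \<subseteq> unit_disc \<and>
      psi1 0 = 0 \<and> psi2 0 = 0 \<and> la1 \<in> unit_disc \<and> la2 \<in> unit_disc \<and>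
      (psi1 la1, psi2 la1) = prod.swap p \<and> (psi1 la2, psi2 la2) = prod.swap q} \<le> x"
    by (rule Inf_lower) (use x h e1' e2' in blast)
qed

lemma lemp_swap: "lemp (prod.swap p) (prod.swap q) = lemp p q"
  using lemp_swap_le[of p q] lemp_swap_le[of "prod.swap p" "prod.swap q"] by simp

theorem mainTheorem5:
  fixes p q :: "complex \<times> complex"
  assumes "(p, q) \<in> Uset \<union> swap_pair ` Uset" and "p \<noteq> q"
  shows "cgreen p q = lemp p q \<and>
    ((p, q) \<in> Uset \<longrightarrow>
       cgreen p q = ereal (ln (cmod (fst p) * cmod (fst q))) \<and>
       lemp p q = ereal (ln (cmod (fst p) * cmod (fst q))))"
proof (cases "(p, q) \<in> Uset")
  case True
  then show ?thesis using U_case[OF True assms(2)] by simp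
next
  case False
  then obtain p' q' where U: "(p', q') \<in> Uset" and e: "(p, q) = swap_pair (p', q')"
    using assms(1) by auto
  then have pp: "p = prod.swap p'" and qq: "q = prod.swap q'"
    by (auto simp: swap_pair_def prod.swap_def)
  have "p' \<noteq> q'" using assms(2) pp qq by auto
  from U_case[OF U this] have "cgreen p' q' = lemp p' q'" by simp
  then show ?thesis using False by (simp add: pp qq cgreen_swap lemp_swap)
qed

end
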